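(* Let $\psi:\mathcal T\to\mathbb S^{d_\psi}_+$ satisfy $\mathrm{tr}(\psi(\tau))\le D$ for all $\tau$. Run policies $\pi_1,\dots,\pi_T$ for $T$ episodes, where each $\pi_t$ may depend on the trajectories of episodes $1,\dots,t-1$, obtaining $\Sigma_T:=\sum_{t=1}^T\psi(\tau_t)$; then rerun each of $\pi_1,\dots,\pi_T$ once more (in fresh independent episodes), obtaining $\widetilde\Sigma_T:=\sum_{t=1}^T\psi(\widetilde\tau_t)$. Then with probability at least $1-\delta$ the following holds: if $\lambda_{\min}(\Sigma_T)\ge 12544\,Dd_\psi\log\frac{2+32T}{\delta}$, then $\lambda_{\min}(\widetilde\Sigma_T)\ge\frac12\lambda_{\min}(\Sigma_T)$ and $\lambda_{\min}\big(\sum_{t=1}^T\Gamma_{\pi_t}\big)\ge\frac12\lambda_{\min}(\Sigma_T)$.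
   Context: General system: for $h=1,\dots,H$, $x_{h+1}=f_h(x_h,u_h,w_h)$ with states in $\mathcal X\subseteq\mathbb R^{d_x}$, inputs in $\mathcal U\subseteq\mathbb R^{d_u}$, independent noise $w_h$ and arbitrary (unknown) dynamics $f_h$; each episode starts from a fixed state. $\mathcal T$ is the set of trajectories $\tau=(x_1,u_1,\dots,x_H,u_H,x_{H+1})$. A policy chooses each $u_h$ (possibly at random) from the past of the episode. $\mathbb S_+^{d}$ is the set of $d\times d$ PSD matrices. For a policy $\pi$, $\Gamma_\pi:=\mathbb E_\pi[\psi(\tau)]$, the expectation over one episode's trajectory under $\pi$. *)

theory Defs
  imports "HOL-Probability.Probability"
begin

definition psd :: "real^'d^'d \<Rightarrow> bool" where
  "psd A \<longleftrightarrow> transpose A = A \<and> (\<forall>x. 0 \<le> x \<bullet> (A *v x))"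

text \<open>Smallest (real) eigenvalue of a matrix; used only for symmetric matrices.\<close>
definition lambda_min :: "real^'d^'d \<Rightarrow> real" where
  "lambda_min A = Min {c. \<exists>v. v \<noteq> 0 \<and> A *v v = c *s v}"

text \<open>Gamma_pi = E_pi[psi(tau)], where law p is the distribution of one episode's
  trajectory under policy p.\<close>
definition Gamma :: "('p \<Rightarrow> 't measure) \<Rightarrow> ('t \<Rightarrow> real^'d^'d) \<Rightarrow> 'p \<Rightarrow> real^'d^'d" where
  "Gamma law psi p = integral\<^sup>L (law p) psi"

definition hist :: "(nat \<Rightarrow> 't \<times> 't) \<Rightarrow> nat \<Rightarrow> (nat \<Rightarrow> 't)" where
  "hist h n = (\<lambda>s\<in>{..<n}. fst (h s))"

text \<open>Joint law of ((tau_0, tau~_0), ..., (tau_{n-1}, tau~_{n-1})): in episode t the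
  policy pol t (hist) is chosen from the previous original trajectories, tau_t is drawn
  from its trajectory law, and a fresh independent rerun tau~_t is drawn from the same law.\<close>
fun joint :: "'t measure \<Rightarrow> ('p \<Rightarrow> 't measure) \<Rightarrow> (nat \<Rightarrow> (nat \<Rightarrow> 't) \<Rightarrow> 'p) \<Rightarrow> nat
    \<Rightarrow> (nat \<Rightarrow> 't \<times> 't) measure" where
  "joint Tr law pol 0 = return (PiM {} (\<lambda>_. Tr \<Otimes>\<^sub>M Tr)) (\<lambda>_. undefined)"
| "joint Tr law pol (Suc n) =
     joint Tr law pol n \<bind> (\<lambda>h. distr (law (pol n (hist h n)) \<Otimes>\<^sub>M law (pol n (hist h n)))
        (PiM {..<Suc n} (\<lambda>_. Tr \<Otimes>\<^sub>M Tr)) (\<lambda>ab. h(n := ab)))"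

end

theory Submission
  imports Defs
begin


lemma sym_inner: fixes A :: "real^'d^'d"
  assumes "transpose A = A" shows "(A *v v) \<bullet> w = v \<bullet> (A *v w)"
proof -
  have "(A *v v) \<bullet> w = (transpose A *v v) \<bullet> w" using assms by simp
  also have "\<dots> = v \<bullet> (A *v w)" by (simp add: transpose_matrix_vector dot_lmul_matrix)
  finally show ?thesis .
qed

lemma bil: fixes A :: "real^'d^'d"
  shows "x \<bullet> (A *v y) = (\<Sum>i\<in>UNIV. \<Sum>j\<in>UNIV. x$i * A$i$j * y$j)"
  by (simp add: inner_vec_def matrix_vector_mult_def sum_distrib_left mult.assoc)

lemma sum2: fixes f :: "'d::finite \<Rightarrow> real"
  assumes "i \<noteq> j"
  shows "(\<Sum>k\<in>UNIV. (if k = i then a else if k = j then b else 0) * f k) = a * f i + b * f j"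
proof -
  have "(\<Sum>k\<in>UNIV. (if k = i then a else if k = j then b else 0) * f k)
      = (\<Sum>k\<in>UNIV. (if k = i then a * f k else 0) + (if k = j then b * f k else 0))"
    by (rule sum.cong) (use assms in auto)
  also have "\<dots> = a * f i + b * f j" by (simp add: sum.distrib)
  finally show ?thesis .
qed

lemma sum2': fixes f :: "'d::finite \<Rightarrow> real"
  assumes "i \<noteq> j"
  shows "(\<Sum>k\<in>UNIV. f k * (if k = i then a else if k = j then b else 0)) = a * f i + b * f j"
  using sum2[OF assms, of a b f] by (simp add: mult.commute)

lemma ifmul: "(if P then 1 else 0) * (t::real) = (if P then t else 0)"
  "t * (if P then 1 else 0) = (if P then t else 0)" by simp_all

lemma psd_sym: "psd A \<Longrightarrow> A$j$i = A$i$j"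
  unfolding psd_def by (metis transpose_def vec_lambda_beta)

lemma psd_diag: assumes "psd A" shows "0 \<le> A$i$i"
proof -
  have "0 \<le> axis i 1 \<bullet> (A *v axis i 1)" using assms unfolding psd_def by blast
  also have "\<dots> = A$i$i" by (simp add: bil axis_def ifmul)
  finally show ?thesis .
qed

lemma psd_quad2: fixes A :: "real^'d^'d"
  assumes "psd A" "i \<noteq> j"
  shows "0 \<le> a*a*A$i$i + 2*a*b*A$i$j + b*b*A$j$j"
proof -
  define x :: "real^'d" where "x = (\<chi> k. if k = i then a else if k = j then b else 0)"
  have "0 \<le> x \<bullet> (A *v x)" using assms unfolding psd_def by blast
  also have "x \<bullet> (A *v x) = (\<Sum>k\<in>UNIV. (if k = i then a else if k = j then b else 0) *
        (\<Sum>l\<in>UNIV. (if l = i then a else if l = j then b else 0) * A$k$l))"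
    by (simp add: bil x_def sum_distrib_left mult_ac)
  also have "\<dots> = a * (a * A$i$i + b * A$i$j) + b * (a * A$j$i + b * A$j$j)"
    using assms(2) by (simp add: sum2 sum2')
  also have "\<dots> = a*a*A$i$i + 2*a*b*A$i$j + b*b*A$j$j"
    using psd_sym[OF assms(1), of i j] by (simp add: algebra_simps)
  finally show ?thesis .
qed

lemma psd_offdiag: fixes A :: "real^'d^'d"
  assumes "psd A" shows "(A$i$j)^2 \<le> A$i$i * A$j$j"
proof (cases "i = j")
  case True then show ?thesis by (simp add: power2_eq_square)
next
  case False
  let ?a = "A$i$i" and ?b = "A$j$j" and ?c = "A$i$j"
  have ai: "0 \<le> ?a" and bj: "0 \<le> ?b" using psd_diag[OF assms] by auto
  have q1: "0 \<le> ?b*?b*?a + 2*?b*(-?c)*?c + (-?c)*(-?c)*?b"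
    using psd_quad2[OF assms False, of ?b "-?c"] .
  have q2: "0 \<le> (-?c)*(-?c)*?a + 2*(-?c)*?a*?c + ?a*?a*?b"
    using psd_quad2[OF assms False, of "-?c" ?a] .
  have q3: "0 \<le> 1*1*?a + 2*1*(-?c)*?c + (-?c)*(-?c)*?b"
    using psd_quad2[OF assms False, of 1 "-?c"] .
  show ?thesis
  proof (cases "?b > 0")
    case True
    have "0 \<le> ?b * (?a*?b - ?c^2)" using q1 by (simp add: algebra_simps power2_eq_square)
    then show ?thesis using True by (simp add: zero_le_mult_iff)
  next
    case nb: False
    then have b0: "?b = 0" using bj by simp
    show ?thesis
    proof (cases "?a > 0")
      case True
      have "0 \<le> ?a * (?a*?b - ?c^2)" using q2 by (simp add: algebra_simps power2_eq_square)
      then show ?thesis using True by (simp add: zero_le_mult_iff)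
    next
      case False
      then have "?a = 0" using ai by simp
      then have "?c * ?c \<le> 0" using q3 b0 by simp
      then have "?c = 0" by (auto simp: mult_le_0_iff)
      then show ?thesis using b0 by simp
    qed
  qed
qed

lemma psd_bilin: fixes A :: "real^'d^'d"
  assumes "psd A" shows "\<bar>x \<bullet> (A *v y)\<bar> \<le> trace A * norm x * norm y"
proof -
  define s :: "real^'d" where "s = (\<chi> i. sqrt (A$i$i))"
  define ax :: "real^'d" where "ax = (\<chi> i. \<bar>x$i\<bar>)"
  define ay :: "real^'d" where "ay = (\<chi> i. \<bar>y$i\<bar>)"
  have ent: "\<bar>A$i$j\<bar> \<le> s$i * s$j" for i j
  proof -
    have "\<bar>A$i$j\<bar> = sqrt ((A$i$j)^2)" by simp
    also have "\<dots> \<le> sqrt (A$i$i * A$j$j)" using psd_offdiag[OF assms] real_sqrt_le_mono by blast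
    also have "\<dots> = s$i * s$j" by (simp add: s_def real_sqrt_mult)
    finally show ?thesis .
  qed
  have "\<bar>x \<bullet> (A *v y)\<bar> \<le> (\<Sum>i\<in>UNIV. \<Sum>j\<in>UNIV. \<bar>x$i * A$i$j * y$j\<bar>)"
    unfolding bil by (rule order_trans[OF sum_abs]) (intro sum_mono sum_abs)
  also have "\<dots> \<le> (\<Sum>i\<in>UNIV. \<Sum>j\<in>UNIV. (ax$i * s$i) * (ay$j * s$j))"
  proof (intro sum_mono)
    fix i j
    have "\<bar>x$i * A$i$j * y$j\<bar> = \<bar>x$i\<bar> * \<bar>A$i$j\<bar> * \<bar>y$j\<bar>" by (simp add: abs_mult)
    also have "\<dots> \<le> \<bar>x$i\<bar> * (s$i * s$j) * \<bar>y$j\<bar>"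
      by (intro mult_right_mono mult_left_mono ent) auto
    finally show "\<bar>x$i * A$i$j * y$j\<bar> \<le> (ax$i * s$i) * (ay$j * s$j)"
      by (simp add: ax_def ay_def mult_ac)
  qed
  also have "\<dots> = (ax \<bullet> s) * (ay \<bullet> s)"
    by (simp add: inner_vec_def sum_product)
  also have "\<dots> \<le> (norm ax * norm s) * (norm ay * norm s)"
  proof -
    have p1: "0 \<le> ax \<bullet> s" unfolding inner_vec_def ax_def s_def using psd_diag[OF assms] by (intro sum_nonneg) auto
    have p2: "0 \<le> ay \<bullet> s" unfolding inner_vec_def ay_def s_def using psd_diag[OF assms] by (intro sum_nonneg) auto
    show ?thesis using p1 p2 norm_cauchy_schwarz[of ax s] norm_cauchy_schwarz[of ay s]
      by (intro mult_mono) auto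
  qed
  also have "norm ax = norm x" unfolding ax_def norm_vec_def L2_set_def by simp
  also have "norm ay = norm y" unfolding ay_def norm_vec_def L2_set_def by simp
  also have "norm s * norm s = trace A"
  proof -
    have "norm s * norm s = (norm s)^2" by (simp add: power2_eq_square)
    also have "\<dots> = (\<Sum>i\<in>UNIV. (s$i)^2)" by (simp add: norm_vec_def L2_set_def sum_nonneg)
    also have "\<dots> = trace A" unfolding trace_def s_def using psd_diag[OF assms] by simp
    finally show ?thesis .
  qed
  then have "norm x * norm s * (norm y * norm s) = trace A * norm x * norm y"
    by (simp add: algebra_simps)
  finally show ?thesis .
qed

lemma quad_zero: fixes a c :: real
  assumes "\<And>t. 0 \<le> 2*t*a + t*t*c" "0 \<le> a" shows "a = 0"
proof (rule ccontr)
  assume "a \<noteq> 0" then have a: "a > 0" using assms(2) by simp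
  define k where "k = \<bar>c\<bar> + 1"
  have k: "k > 0" "\<bar>c\<bar> < k" by (auto simp: k_def)
  define t where "t = - a / k"
  have "0 \<le> 2*t*a + t*t*c" by (rule assms(1))
  also have "t*t*c \<le> t*t*\<bar>c\<bar>" by (intro mult_left_mono) auto
  also have "t*t*\<bar>c\<bar> \<le> t*t*k" using k by (intro mult_left_mono) auto
  also have "2*t*a + t*t*k = - a*a/k" using k by (simp add: t_def field_simps power2_eq_square)
  finally have "a * a / k \<le> 0" by simp
  moreover have "a * a / k > 0" using a k by simp
  ultimately show False by linarith
qed

lemma cont_quad: "continuous_on S (\<lambda>x::real^'d. x \<bullet> (A *v x))"
  by (intro continuous_intros linear_continuous_on matrix_vector_mul_linear)

lemma exists_unit: "\<exists>u::real^'d. norm u = 1"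
  by (metis norm_axis_1)

lemma rayleigh: fixes A :: "real^'d^'d"
  assumes sym: "transpose A = A"
  shows "\<exists>u. norm u = 1 \<and> A *v u = (u \<bullet> (A *v u)) *s u \<and>
              (\<forall>x. (u \<bullet> (A *v u)) * (norm x)^2 \<le> x \<bullet> (A *v x))"
proof -
  let ?f = "\<lambda>x::real^'d. x \<bullet> (A *v x)"
  have "\<exists>u\<in>sphere 0 1. \<forall>y\<in>sphere 0 1. ?f u \<le> ?f y"
    by (rule continuous_attains_inf) (use exists_unit in \<open>auto intro: cont_quad\<close>)
  then obtain u where u: "norm u = 1" and umin: "\<And>y. norm y = 1 \<Longrightarrow> ?f u \<le> ?f y" by auto
  define m where "m = ?f u"
  have all: "m * (norm x)^2 \<le> ?f x" for x
  proof (cases "x = 0")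
    case True then show ?thesis by simp
  next
    case False
    then have n: "norm x > 0" by simp
    have "m \<le> ?f (x /\<^sub>R norm x)" unfolding m_def by (rule umin) (use n in simp)
    also have "?f (x /\<^sub>R norm x) = ?f x / (norm x)^2"
      using n by (simp add: matrix_vector_mult_scaleR power2_eq_square field_simps)
    finally show ?thesis using n by (simp add: field_simps)
  qed
  define Q where "Q y = y \<bullet> (A *v y - m *s y)" for y
  have Qnn: "0 \<le> Q y" for y using all[of y]
    by (simp add: Q_def inner_diff_right power2_norm_eq_inner scalar_mult_eq_scaleR)
  define r where "r = A *v u - m *s u"
  have Qu: "Q u = 0" using u by (simp add: Q_def m_def inner_diff_right scalar_mult_eq_scaleR power2_norm_eq_inner[symmetric])
  have exp: "Q (u + t *s r) = Q u + 2*t*(r \<bullet> r) + t*t*Q r" for t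
  proof -
    have sy: "u \<bullet> (A *v r) = (A *v u) \<bullet> r" using sym_inner[OF sym, of u r] by simp
    have e1: "A *v (u + t *s r) - m *s (u + t *s r) = (A *v u - m *s u) + t *\<^sub>R (A *v r - m *s r)"
      by (simp add: matrix_vector_right_distrib matrix_vector_mult_scaleR scalar_mult_eq_scaleR
           scaleR_add_right scaleR_diff_right)
    have "Q (u + t *s r) = (u + t *\<^sub>R r) \<bullet> ((A *v u - m *s u) + t *\<^sub>R (A *v r - m *s r))"
      unfolding Q_def e1 by (simp add: scalar_mult_eq_scaleR)
    also have "\<dots> = Q u + t * (u \<bullet> (A *v r - m *s r)) + t * (r \<bullet> (A *v u - m *s u)) + t*t*Q r"
      unfolding Q_def inner_add_left inner_add_right inner_scaleR_left inner_scaleR_right by (simp add: algebra_simps)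
    also have "u \<bullet> (A *v r - m *s r) = r \<bullet> r"
    proof -
      have "u \<bullet> (A *v r - m *s r) = (A *v u) \<bullet> r - m * (u \<bullet> r)"
        using sy by (simp add: inner_diff_right scalar_mult_eq_scaleR)
      also have "\<dots> = r \<bullet> r" by (simp add: r_def inner_diff_left scalar_mult_eq_scaleR inner_commute)
      finally show ?thesis .
    qed
    also have "r \<bullet> (A *v u - m *s u) = r \<bullet> r" by (simp add: r_def)
    finally show ?thesis by simp
  qed
  have "r \<bullet> r = 0"
  proof (rule quad_zero)
    fix t show "0 \<le> 2*t*(r \<bullet> r) + t*t*Q r" using Qnn[of "u + t *s r"] exp[of t] Qu by simp
  qed simp
  then have "r = 0" by simp
  then have "A *v u = m *s u" by (simp add: r_def)
  then show ?thesis using u all unfolding m_def by blast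
qed

lemma eig_finite: fixes A :: "real^'d^'d"
  assumes sym: "transpose A = A"
  shows "finite {c. \<exists>v. v \<noteq> 0 \<and> A *v v = c *s v}"
proof -
  define E where "E = {c. \<exists>v. v \<noteq> 0 \<and> A *v v = c *s v}"
  define ev where "ev c = (SOME v. v \<noteq> 0 \<and> A *v v = c *s v)" for c
  have ev: "ev c \<noteq> 0 \<and> A *v ev c = c *s ev c" if "c \<in> E" for c
  proof -
    have "\<exists>v. v \<noteq> 0 \<and> A *v v = c *s v" using that unfolding E_def by simp
    then show ?thesis unfolding ev_def by (rule someI_ex)
  qed
  have inj: "inj_on ev E"
  proof (rule inj_onI)
    fix c c' assume c: "c \<in> E" "c' \<in> E" "ev c = ev c'"
    have "c *s ev c = A *v ev c" using ev[OF c(1)] by simp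
    also have "\<dots> = A *v ev c'" using c(3) by simp
    also have "\<dots> = c' *s ev c'" using ev[OF c(2)] by simp
    also have "\<dots> = c' *s ev c" using c(3) by simp
    finally have "c *s ev c = c' *s ev c" .
    then have "(c - c') *\<^sub>R ev c = 0" by (simp add: scalar_mult_eq_scaleR scaleR_diff_left)
    then show "c = c'" using ev[OF c(1)] by simp
  qed
  have orth: "pairwise orthogonal (ev ` E)"
  proof (rule pairwiseI)
    fix x y assume xy: "x \<in> ev ` E" "y \<in> ev ` E" "x \<noteq> y"
    then obtain c c' where c: "c \<in> E" "c' \<in> E" "x = ev c" "y = ev c'" by blast
    then have ne: "c \<noteq> c'" using xy(3) by blast
    have "c * (x \<bullet> y) = (A *v x) \<bullet> y" using ev[OF c(1)] c(3) by (simp add: scalar_mult_eq_scaleR)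
    also have "\<dots> = x \<bullet> (A *v y)" by (rule sym_inner[OF sym])
    also have "\<dots> = c' * (x \<bullet> y)" using ev[OF c(2)] c(4) by (simp add: scalar_mult_eq_scaleR)
    finally have "(c - c') * (x \<bullet> y) = 0" by (simp add: left_diff_distrib)
    then show "orthogonal x y" using ne by (simp add: orthogonal_def)
  qed
  have "0 \<notin> ev ` E"
  proof
    assume "0 \<in> ev ` E"
    then obtain c where c: "c \<in> E" "0 = ev c" by blast
    then show False using ev[OF c(1)] by simp
  qed
  then have "independent (ev ` E)" using pairwise_orthogonal_independent orth by blast
  then have "finite (ev ` E)" using independent_bound by blast
  then have "finite E" using finite_imageD[OF _ inj] by blast
  then show ?thesis unfolding E_def .
qed

lemma lambda_min_char: fixes A :: "real^'d^'d"
  assumes sym: "transpose A = A"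
  shows "\<exists>u. norm u = 1 \<and> lambda_min A = u \<bullet> (A *v u) \<and> (\<forall>x. lambda_min A * (norm x)^2 \<le> x \<bullet> (A *v x))"
proof -
  obtain u where u: "norm u = 1" "A *v u = (u \<bullet> (A *v u)) *s u"
    and all: "\<And>x. (u \<bullet> (A *v u)) * (norm x)^2 \<le> x \<bullet> (A *v x)"
    using rayleigh[OF sym] by blast
  define m where "m = u \<bullet> (A *v u)"
  have "lambda_min A = m"
    unfolding lambda_min_def
  proof (rule Min_eqI)
    show "finite {c. \<exists>v. v \<noteq> 0 \<and> A *v v = c *s v}" by (rule eig_finite[OF sym])
    show "m \<in> {c. \<exists>v. v \<noteq> 0 \<and> A *v v = c *s v}" using u unfolding m_def
      by (intro CollectI exI[of _ u]) auto
    fix c assume "c \<in> {c. \<exists>v. v \<noteq> 0 \<and> A *v v = c *s v}"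
    then obtain v where v: "v \<noteq> 0" "A *v v = c *s v" by auto
    have "m * (norm v)^2 \<le> v \<bullet> (A *v v)" using all unfolding m_def by blast
    also have "\<dots> = c * (norm v)^2" using v by (simp add: scalar_mult_eq_scaleR power2_norm_eq_inner)
    finally show "m \<le> c" using v by simp
  qed
  show ?thesis
  proof (intro exI[of _ u] conjI allI)
    show "norm u = 1" by (rule u(1))
    show "lambda_min A = u \<bullet> (A *v u)" using \<open>lambda_min A = m\<close> m_def by simp
    fix x show "lambda_min A * (norm x)^2 \<le> x \<bullet> (A *v x)" using all[of x] \<open>lambda_min A = m\<close> m_def by simp
  qed
qed


definition PP :: "'t measure \<Rightarrow> nat \<Rightarrow> (nat \<Rightarrow> 't \<times> 't) measure" where
  "PP Tr n = PiM {..<n} (\<lambda>_. Tr \<Otimes>\<^sub>M Tr)"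

definition KK :: "'t measure \<Rightarrow> ('p \<Rightarrow> 't measure) \<Rightarrow> (nat \<Rightarrow> (nat \<Rightarrow> 't) \<Rightarrow> 'p) \<Rightarrow> nat
    \<Rightarrow> (nat \<Rightarrow> 't \<times> 't) \<Rightarrow> (nat \<Rightarrow> 't \<times> 't) measure" where
  "KK Tr law pol n h = distr (law (pol n (hist h n)) \<Otimes>\<^sub>M law (pol n (hist h n)))
        (PP Tr (Suc n)) (\<lambda>ab. h(n := ab))"

lemma joint_Suc': "joint Tr law pol (Suc n) = joint Tr law pol n \<bind> KK Tr law pol n"
  unfolding KK_def[abs_def] PP_def by simp

lemma hist_meas: assumes "t \<le> n"
  shows "(\<lambda>h. hist h t) \<in> PP Tr n \<rightarrow>\<^sub>M PiM {..<t} (\<lambda>_. Tr)"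
  unfolding hist_def PP_def
proof (rule measurable_restrict)
  fix i assume "i \<in> {..<t}"
  then have i: "i \<in> {..<n}" using assms by auto
  then show "(\<lambda>h. fst (h i)) \<in> PiM {..<n} (\<lambda>_. Tr \<Otimes>\<^sub>M Tr) \<rightarrow>\<^sub>M Tr"
    by (intro measurable_compose[OF measurable_component_singleton[OF i] measurable_fst])
qed

lemma comp_meas: assumes "t < n"
  shows "(\<lambda>h. h t) \<in> PP Tr n \<rightarrow>\<^sub>M Tr \<Otimes>\<^sub>M Tr"
  unfolding PP_def using assms by (intro measurable_component_singleton) auto

locale setting =
  fixes Tr :: "'t measure" and law :: "'p \<Rightarrow> 't measure" and pol :: "nat \<Rightarrow> (nat \<Rightarrow> 't) \<Rightarrow> 'p"
  assumes law_kernel: "\<And>t. (\<lambda>h. law (pol t h)) \<in> PiM {..<t} (\<lambda>_. Tr) \<rightarrow>\<^sub>M prob_algebra Tr"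
begin

lemma law_prob: assumes "hh \<in> space (PiM {..<t} (\<lambda>_. Tr))"
  shows "prob_space (law (pol t hh))" "sets (law (pol t hh)) = sets Tr"
  using measurable_space[OF law_kernel assms] by (auto simp: space_prob_algebra)

lemma hist_space: "h \<in> space (PP Tr n) \<Longrightarrow> t \<le> n \<Longrightarrow> hist h t \<in> space (PiM {..<t} (\<lambda>_. Tr))"
  using measurable_space[OF hist_meas] by blast

lemma upd_meas: assumes "h \<in> space (PP Tr n)"
  shows "(\<lambda>ab. h(n := ab)) \<in> Tr \<Otimes>\<^sub>M Tr \<rightarrow>\<^sub>M PP Tr (Suc n)"
  unfolding PP_def
  by (rule measurable_fun_upd[where J="{..<n}"]) (use assms in \<open>auto simp: PP_def\<close>)

lemma KK_prob: assumes "h \<in> space (PP Tr n)"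
  shows "prob_space (KK Tr law pol n h)" "sets (KK Tr law pol n h) = sets (PP Tr (Suc n))"
proof -
  let ?L = "law (pol n (hist h n))"
  have hs: "hist h n \<in> space (PiM {..<n} (\<lambda>_. Tr))" using hist_space[OF assms] by simp
  have L: "prob_space ?L" "sets ?L = sets Tr" using law_prob[OF hs] by auto
  have sL: "sets (?L \<Otimes>\<^sub>M ?L) = sets (Tr \<Otimes>\<^sub>M Tr)" using L(2) by (intro sets_pair_measure_cong) auto
  have m: "(\<lambda>ab. h(n := ab)) \<in> ?L \<Otimes>\<^sub>M ?L \<rightarrow>\<^sub>M PP Tr (Suc n)"
    using upd_meas[OF assms] measurable_cong_sets[OF sL refl] by blast
  show "prob_space (KK Tr law pol n h)" unfolding KK_def
    by (rule prob_space.prob_space_distr[OF prob_space_pair[OF L(1) L(1)] m])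
  show "sets (KK Tr law pol n h) = sets (PP Tr (Suc n))" unfolding KK_def by simp
qed

lemma KK_meas_sub: "KK Tr law pol n \<in> PP Tr n \<rightarrow>\<^sub>M subprob_algebra (PP Tr (Suc n))"
  unfolding KK_def
proof (rule measurable_distr2[where M="Tr \<Otimes>\<^sub>M Tr"])
  show "(\<lambda>(h, ab). h(n := ab)) \<in> PP Tr n \<Otimes>\<^sub>M (Tr \<Otimes>\<^sub>M Tr) \<rightarrow>\<^sub>M PP Tr (Suc n)"
    unfolding PP_def split_beta'
    by (rule measurable_fun_upd[where J="{..<n}"]) auto
  have l: "(\<lambda>h. law (pol n (hist h n))) \<in> PP Tr n \<rightarrow>\<^sub>M subprob_algebra Tr"
    by (rule measurable_prob_algebraD[OF measurable_compose[OF hist_meas law_kernel]]) simp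
  show "(\<lambda>h. law (pol n (hist h n)) \<Otimes>\<^sub>M law (pol n (hist h n))) \<in> PP Tr n \<rightarrow>\<^sub>M subprob_algebra (Tr \<Otimes>\<^sub>M Tr)"
    by (rule measurable_pair_measure[OF l l])
qed

lemma KK_meas: "KK Tr law pol n \<in> PP Tr n \<rightarrow>\<^sub>M prob_algebra (PP Tr (Suc n))"
  unfolding prob_algebra_def
  by (rule measurable_restrict_space2) (use KK_prob KK_meas_sub in auto)

lemma joint_prob: "joint Tr law pol n \<in> space (prob_algebra (PP Tr n))"
proof (induction n)
  case 0
  have "PP Tr 0 = PiM {} (\<lambda>_. Tr \<Otimes>\<^sub>M Tr)" by (simp add: PP_def)
  then show ?case by (simp add: space_prob_algebra prob_space_return)
next
  case (Suc n)
  show ?case unfolding joint_Suc' space_prob_algebra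
    using prob_space_bind'[OF Suc KK_meas] sets_bind'[OF Suc KK_meas] by simp
qed

lemma joint_sets: "sets (joint Tr law pol n) = sets (PP Tr n)"
  and joint_ps: "prob_space (joint Tr law pol n)"
  using joint_prob[of n] by (auto simp: space_prob_algebra)

lemma joint_space: "space (joint Tr law pol n) = space (PP Tr n)"
  by (rule sets_eq_imp_space_eq[OF joint_sets])


definition SS :: "('t \<times> 't \<Rightarrow> real) \<Rightarrow> (nat \<Rightarrow> (nat \<Rightarrow> 't) \<Rightarrow> real) \<Rightarrow> nat \<Rightarrow> (nat \<Rightarrow> 't \<times> 't) \<Rightarrow> real" where
  "SS \<phi> \<Psi> n \<omega> = (\<Sum>t<n. \<phi> (\<omega> t) - \<Psi> t (hist \<omega> t))"

lemma SS_meas: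
  assumes \<phi>: "\<phi> \<in> borel_measurable (Tr \<Otimes>\<^sub>M Tr)"
    and \<Psi>: "\<And>t. \<Psi> t \<in> borel_measurable (PiM {..<t} (\<lambda>_. Tr))"
    and nm: "n \<le> m"
  shows "SS \<phi> \<Psi> n \<in> borel_measurable (PP Tr m)"
  unfolding SS_def
proof (intro borel_measurable_sum borel_measurable_diff)
  fix t assume "t \<in> {..<n}"
  then have t: "t < m" "t \<le> m" using nm by auto
  show "(\<lambda>\<omega>. \<phi> (\<omega> t)) \<in> borel_measurable (PP Tr m)"
    by (rule measurable_compose[OF comp_meas[OF t(1)] \<phi>])
  show "(\<lambda>\<omega>. \<Psi> t (hist \<omega> t)) \<in> borel_measurable (PP Tr m)"
    by (rule measurable_compose[OF hist_meas[OF t(2)] \<Psi>])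
qed

lemma hist_upd: "t \<le> n \<Longrightarrow> hist (h(n := ab)) t = hist h t"
  unfolding hist_def by (intro restrict_ext) auto

lemma SS_upd: "SS \<phi> \<Psi> (Suc n) (h(n := ab)) = SS \<phi> \<Psi> n h + (\<phi> ab - \<Psi> n (hist h n))"
proof -
  have "SS \<phi> \<Psi> n (h(n := ab)) = SS \<phi> \<Psi> n h"
    unfolding SS_def by (intro sum.cong refl) (simp add: hist_upd)
  then show ?thesis by (simp add: SS_def hist_upd)
qed

lemma supermart:
  assumes \<phi>: "\<phi> \<in> borel_measurable (Tr \<Otimes>\<^sub>M Tr)"
    and \<Psi>: "\<And>t. \<Psi> t \<in> borel_measurable (PiM {..<t} (\<lambda>_. Tr))"
    and cond: "\<And>t hh. hh \<in> space (PiM {..<t} (\<lambda>_. Tr)) \<Longrightarrow>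
       (\<integral>\<^sup>+ab. ennreal (exp (\<phi> ab)) \<partial>(law (pol t hh) \<Otimes>\<^sub>M law (pol t hh))) \<le> ennreal (exp (\<Psi> t hh))"
  shows "(\<integral>\<^sup>+\<omega>. ennreal (exp (SS \<phi> \<Psi> n \<omega>)) \<partial>joint Tr law pol n) \<le> 1"
proof (induction n)
  case 0
  have "PP Tr 0 = PiM {} (\<lambda>_. Tr \<Otimes>\<^sub>M Tr)" by (simp add: PP_def)
  then show ?case by (simp add: SS_def)
next
  case (Suc n)
  have fm: "(\<lambda>\<omega>. ennreal (exp (SS \<phi> \<Psi> (Suc n) \<omega>))) \<in> borel_measurable (PP Tr (Suc n))"
    using SS_meas[OF \<phi> \<Psi> le_refl] by measurable
  have "(\<integral>\<^sup>+\<omega>. ennreal (exp (SS \<phi> \<Psi> (Suc n) \<omega>)) \<partial>joint Tr law pol (Suc n))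
      = (\<integral>\<^sup>+h. \<integral>\<^sup>+\<omega>. ennreal (exp (SS \<phi> \<Psi> (Suc n) \<omega>)) \<partial>KK Tr law pol n h \<partial>joint Tr law pol n)"
    unfolding joint_Suc' by (rule nn_integral_bind[OF fm KK_meas_sub[unfolded joint_sets[symmetric]
          measurable_cong_sets[OF joint_sets[symmetric] refl]]])
  also have "\<dots> \<le> (\<integral>\<^sup>+h. ennreal (exp (SS \<phi> \<Psi> n h)) \<partial>joint Tr law pol n)"
  proof (rule nn_integral_mono)
    fix h assume "h \<in> space (joint Tr law pol n)"
    then have h: "h \<in> space (PP Tr n)" by (simp add: joint_space)
    let ?L = "law (pol n (hist h n))"
    have hs: "hist h n \<in> space (PiM {..<n} (\<lambda>_. Tr))" using hist_space[OF h] by simp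
    have L: "sets ?L = sets Tr" using law_prob[OF hs] by auto
    have sL: "sets (?L \<Otimes>\<^sub>M ?L) = sets (Tr \<Otimes>\<^sub>M Tr)" using L by (intro sets_pair_measure_cong) auto
    have m: "(\<lambda>ab. h(n := ab)) \<in> ?L \<Otimes>\<^sub>M ?L \<rightarrow>\<^sub>M PP Tr (Suc n)"
      using upd_meas[OF h] measurable_cong_sets[OF sL refl] by blast
    have \<phi>T: "(\<lambda>ab. ennreal (exp (\<phi> ab))) \<in> borel_measurable (Tr \<Otimes>\<^sub>M Tr)"
      using \<phi> by measurable
    have \<phi>L: "(\<lambda>ab. ennreal (exp (\<phi> ab))) \<in> borel_measurable (?L \<Otimes>\<^sub>M ?L)"
      using measurable_cong_sets[OF sL refl] \<phi>T by blast
    have "(\<integral>\<^sup>+\<omega>. ennreal (exp (SS \<phi> \<Psi> (Suc n) \<omega>)) \<partial>KK Tr law pol n h)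
        = (\<integral>\<^sup>+ab. ennreal (exp (SS \<phi> \<Psi> (Suc n) (h(n := ab)))) \<partial>(?L \<Otimes>\<^sub>M ?L))"
      unfolding KK_def by (rule nn_integral_distr[OF m]) (use fm in simp)
    also have "\<dots> = (\<integral>\<^sup>+ab. ennreal (exp (SS \<phi> \<Psi> n h - \<Psi> n (hist h n))) * ennreal (exp (\<phi> ab)) \<partial>(?L \<Otimes>\<^sub>M ?L))"
      by (intro nn_integral_cong) (simp add: SS_upd ennreal_mult[symmetric] exp_add[symmetric] algebra_simps)
    also have "\<dots> = ennreal (exp (SS \<phi> \<Psi> n h - \<Psi> n (hist h n))) * (\<integral>\<^sup>+ab. ennreal (exp (\<phi> ab)) \<partial>(?L \<Otimes>\<^sub>M ?L))"
      by (rule nn_integral_cmult[OF \<phi>L])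
    also have "\<dots> \<le> ennreal (exp (SS \<phi> \<Psi> n h - \<Psi> n (hist h n))) * ennreal (exp (\<Psi> n (hist h n)))"
      by (intro mult_left_mono cond[OF hs]) simp
    also have "\<dots> = ennreal (exp (SS \<phi> \<Psi> n h))"
      by (simp add: ennreal_mult[symmetric] exp_add[symmetric])
    finally show "(\<integral>\<^sup>+\<omega>. ennreal (exp (SS \<phi> \<Psi> (Suc n) \<omega>)) \<partial>KK Tr law pol n h) \<le> ennreal (exp (SS \<phi> \<Psi> n h))" .
  qed
  also have "\<dots> \<le> 1" by (rule Suc)
  finally show ?case .
qed

lemma markov_exp:
  assumes ps: "prob_space M" and f: "f \<in> borel_measurable M"
    and int: "(\<integral>\<^sup>+x. ennreal (exp (f x)) \<partial>M) \<le> 1"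
  shows "emeasure M {x\<in>space M. c < f x} \<le> ennreal (exp (- c))"
proof -
  have S: "{x\<in>space M. c < f x} \<in> sets M" using f by measurable
  have "emeasure M {x\<in>space M. c < f x} = (\<integral>\<^sup>+x. indicator {x\<in>space M. c < f x} x \<partial>M)"
    using S by simp
  also have "\<dots> \<le> (\<integral>\<^sup>+x. ennreal (exp (- c)) * ennreal (exp (f x)) \<partial>M)"
  proof (rule nn_integral_mono)
    fix x assume "x \<in> space M"
    show "indicator {x\<in>space M. c < f x} x \<le> ennreal (exp (- c)) * ennreal (exp (f x))"
    proof (cases "c < f x")
      case True
      then have "1 \<le> exp (- c) * exp (f x)" by (simp add: exp_add[symmetric])
      then have "ennreal 1 \<le> ennreal (exp (- c) * exp (f x))" by (rule ennreal_leI)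
      then show ?thesis using True \<open>x \<in> space M\<close> by (simp add: ennreal_mult[symmetric] indicator_def)
    qed (simp add: indicator_def)
  qed
  also have "\<dots> = ennreal (exp (- c)) * (\<integral>\<^sup>+x. ennreal (exp (f x)) \<partial>M)"
    by (rule nn_integral_cmult) (use f in measurable)
  also have "\<dots> \<le> ennreal (exp (- c)) * 1" by (intro mult_left_mono int) simp
  finally show ?thesis by simp
qed

end


lemma exp_convex_bound: fixes a y :: real assumes "0 \<le> y" "y \<le> 1"
  shows "exp (a * y) \<le> 1 + (exp a - 1) * y"
proof -
  have c: "convex_on UNIV (\<lambda>x. exp (1 * x))" by (rule convex_on_exp) simp
  have "exp (1 * ((1 - y) * 0 + y * a)) \<le> (1 - y) * exp (1 * 0) + y * exp (1 * a)"
    using convex_onD[OF c, of y 0 a] assms by simp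
  then show ?thesis by (simp add: algebra_simps)
qed

lemma exp_int_bound:
  assumes ps: "prob_space L" and f: "f \<in> borel_measurable L"
    and b: "\<And>x. x \<in> space L \<Longrightarrow> 0 \<le> f x \<and> f x \<le> 1"
  shows "(\<integral>\<^sup>+x. ennreal (exp (a * f x)) \<partial>L) \<le> ennreal (exp ((exp a - 1) * integral\<^sup>L L f))"
proof -
  interpret prob_space L by (rule ps)
  have intf: "integrable L f"
    by (rule integrable_const_bound[where B=1]) (use b f in \<open>auto intro!: AE_I2\<close>)
  have "(\<integral>\<^sup>+x. ennreal (exp (a * f x)) \<partial>L) \<le> (\<integral>\<^sup>+x. ennreal (1 + (exp a - 1) * f x) \<partial>L)"
    by (intro nn_integral_mono ennreal_leI exp_convex_bound) (use b in auto)
  also have "\<dots> = ennreal (integral\<^sup>L L (\<lambda>x. 1 + (exp a - 1) * f x))"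
  proof (rule nn_integral_eq_integral)
    show "integrable L (\<lambda>x. 1 + (exp a - 1) * f x)" using intf by auto
    show "AE x in L. 0 \<le> 1 + (exp a - 1) * f x"
    proof (rule AE_I2)
      fix x assume x: "x \<in> space L"
      have "0 < exp (a * f x)" by simp
      also have "\<dots> \<le> 1 + (exp a - 1) * f x" using b[OF x] by (intro exp_convex_bound) auto
      finally show "0 \<le> 1 + (exp a - 1) * f x" by simp
    qed
  qed
  also have "integral\<^sup>L L (\<lambda>x. 1 + (exp a - 1) * f x) = 1 + (exp a - 1) * integral\<^sup>L L f"
    using intf by (simp add: prob_space)
  also have "ennreal (1 + (exp a - 1) * integral\<^sup>L L f) \<le> ennreal (exp ((exp a - 1) * integral\<^sup>L L f))"
    by (intro ennreal_leI exp_ge_add_one_self)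
  finally show ?thesis .
qed

lemma pair_fst_int: assumes "prob_space L" "f \<in> borel_measurable L"
  shows "(\<integral>\<^sup>+ab. f (fst ab) \<partial>(L \<Otimes>\<^sub>M L)) = (\<integral>\<^sup>+x. f x \<partial>L)"
proof -
  interpret prob_space L by fact
  have "(\<integral>\<^sup>+ab. f (fst ab) \<partial>(L \<Otimes>\<^sub>M L)) = (\<integral>\<^sup>+x. \<integral>\<^sup>+y. f (fst (x, y)) \<partial>L \<partial>L)"
    by (rule sigma_finite_measure.nn_integral_fst[symmetric])
      (use assms in \<open>auto intro: prob_space_imp_sigma_finite\<close>)
  also have "\<dots> = (\<integral>\<^sup>+x. f x \<partial>L)" by (simp add: emeasure_space_1)
  finally show ?thesis .
qed

lemma pair_snd_int: assumes "prob_space L" "f \<in> borel_measurable L"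
  shows "(\<integral>\<^sup>+ab. f (snd ab) \<partial>(L \<Otimes>\<^sub>M L)) = (\<integral>\<^sup>+x. f x \<partial>L)"
proof -
  interpret prob_space L by fact
  have "(\<integral>\<^sup>+ab. f (snd ab) \<partial>(L \<Otimes>\<^sub>M L)) = (\<integral>\<^sup>+x. \<integral>\<^sup>+y. f (snd (x, y)) \<partial>L \<partial>L)"
    by (rule sigma_finite_measure.nn_integral_fst[symmetric])
      (use assms in \<open>auto intro: prob_space_imp_sigma_finite\<close>)
  also have "\<dots> = (\<integral>\<^sup>+x. f x \<partial>L)" by (simp add: emeasure_space_1)
  finally show ?thesis .
qed

context setting begin

lemma event_bound:
  assumes f: "f \<in> borel_measurable Tr" and b: "\<And>x. x \<in> space Tr \<Longrightarrow> 0 \<le> f x \<and> f x \<le> 1"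
    and sel: "sel = fst \<or> sel = snd"
  shows "emeasure (joint Tr law pol n) {\<omega> \<in> space (joint Tr law pol n).
      c < (\<Sum>t<n. a * f (sel (\<omega> t)) - (exp a - 1) * integral\<^sup>L (law (pol t (hist \<omega> t))) f)}
    \<le> ennreal (exp (- c)) \<and> {\<omega> \<in> space (joint Tr law pol n).
      c < (\<Sum>t<n. a * f (sel (\<omega> t)) - (exp a - 1) * integral\<^sup>L (law (pol t (hist \<omega> t))) f)} \<in> sets (joint Tr law pol n)"
proof -
  define \<phi> where "\<phi> ab = a * f (sel ab)" for ab
  define \<Psi> where "\<Psi> t hh = (exp a - 1) * integral\<^sup>L (law (pol t hh)) f" for t hh
  have selm: "sel \<in> Tr \<Otimes>\<^sub>M Tr \<rightarrow>\<^sub>M Tr" using sel by auto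
  have \<phi>m: "\<phi> \<in> borel_measurable (Tr \<Otimes>\<^sub>M Tr)"
    unfolding \<phi>_def using measurable_compose[OF selm f] by measurable
  have \<Psi>m: "\<Psi> t \<in> borel_measurable (PiM {..<t} (\<lambda>_. Tr))" for t
  proof -
    have "(\<lambda>hh. integral\<^sup>L (law (pol t hh)) f) \<in> borel_measurable (PiM {..<t} (\<lambda>_. Tr))"
      by (rule measurable_compose[OF measurable_prob_algebraD[OF law_kernel] integral_measurable_subprob_algebra[OF f]])
    then show ?thesis unfolding \<Psi>_def by measurable
  qed
  have cond: "(\<integral>\<^sup>+ab. ennreal (exp (\<phi> ab)) \<partial>(law (pol t hh) \<Otimes>\<^sub>M law (pol t hh))) \<le> ennreal (exp (\<Psi> t hh))"
    if hh: "hh \<in> space (PiM {..<t} (\<lambda>_. Tr))" for t hh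
  proof -
    let ?L = "law (pol t hh)"
    have L: "prob_space ?L" "sets ?L = sets Tr" using law_prob[OF hh] by auto
    have sp: "space ?L = space Tr" using L(2) by (rule sets_eq_imp_space_eq)
    have fL: "f \<in> borel_measurable ?L" using f measurable_cong_sets[OF L(2) refl] by blast
    have efL: "(\<lambda>x. ennreal (exp (a * f x))) \<in> borel_measurable ?L" using fL by measurable
    have "(\<integral>\<^sup>+ab. ennreal (exp (\<phi> ab)) \<partial>(?L \<Otimes>\<^sub>M ?L)) = (\<integral>\<^sup>+x. ennreal (exp (a * f x)) \<partial>?L)"
      using sel pair_fst_int[OF L(1) efL] pair_snd_int[OF L(1) efL] unfolding \<phi>_def by auto
    also have "\<dots> \<le> ennreal (exp (\<Psi> t hh))"
      unfolding \<Psi>_def by (rule exp_int_bound[OF L(1) fL]) (use b sp in auto)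
    finally show ?thesis .
  qed
  have Sm: "SS \<phi> \<Psi> n \<in> borel_measurable (joint Tr law pol n)"
    using SS_meas[OF \<phi>m \<Psi>m le_refl] measurable_cong_sets[OF joint_sets refl] by blast
  have "emeasure (joint Tr law pol n) {\<omega> \<in> space (joint Tr law pol n). c < SS \<phi> \<Psi> n \<omega>} \<le> ennreal (exp (- c))"
    by (rule markov_exp[OF joint_ps Sm supermart[OF \<phi>m \<Psi>m cond]])
  moreover have "{\<omega> \<in> space (joint Tr law pol n). c < SS \<phi> \<Psi> n \<omega>} \<in> sets (joint Tr law pol n)"
    using Sm by measurable
  ultimately show ?thesis unfolding SS_def \<phi>_def \<Psi>_def by (simp add: algebra_simps)
qed

end


definition net :: "nat \<Rightarrow> (real^'d) set" where
  "net M = {v. norm v \<le> 1} \<inter> (\<lambda>k. \<chi> i. real_of_int (k i) / real M) ` (PiE UNIV (\<lambda>_. {- int M..int M}))"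

lemma net_card: "finite (net M :: (real^'d) set) \<and> card (net M :: (real^'d) set) \<le> (2*M+1)^CARD('d)"
proof -
  let ?P = "PiE (UNIV::'d set) (\<lambda>_. {- int M..int M})"
  let ?f = "(\<lambda>k. (\<chi> i. real_of_int (k i) / real M) :: real^'d)"
  have fP: "finite ?P" by (intro finite_PiE) auto
  have cP: "card ?P = (2*M+1)^CARD('d)"
    by (simp add: card_PiE nat_add_distrib nat_mult_distrib)
  have sub: "net M \<subseteq> ?f ` ?P" unfolding net_def by auto
  have "finite (?f ` ?P)" using fP by simp
  then have "finite (net M :: (real^'d) set)" using finite_subset[OF sub] by blast
  moreover have "card (net M :: (real^'d) set) \<le> card (?f ` ?P)"
    by (rule card_mono[OF _ sub]) (use fP in simp)
  moreover have "card (?f ` ?P) \<le> card ?P" by (rule card_image_le[OF fP])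
  ultimately show ?thesis using cP by linarith
qed

lemma net_cover:
  fixes u :: "real^'d"
  assumes M: "M \<ge> 1" and u: "norm u \<le> 1"
  shows "\<exists>v\<in>net M. norm (u - v) \<le> real CARD('d) / real M"
proof -
  define r where "r i = \<lfloor>real M * \<bar>u$i\<bar>\<rfloor>" for i
  define k where "k i = (if u$i \<ge> 0 then r i else - r i)" for i
  define v :: "real^'d" where "v = (\<chi> i. real_of_int (k i) / real M)"
  have Mp: "real M > 0" using M by simp
  have ui: "\<bar>u$i\<bar> \<le> 1" for i using component_le_norm_cart[of u i] u by linarith
  have r0: "0 \<le> r i" for i unfolding r_def using Mp by simp
  have rM: "r i \<le> int M" for i
  proof -
    have "real M * \<bar>u$i\<bar> \<le> real M" using ui[of i] Mp by (simp add: mult_left_le)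
    then have "\<lfloor>real M * \<bar>u$i\<bar>\<rfloor> \<le> \<lfloor>real M\<rfloor>" by (rule floor_mono)
    then show ?thesis unfolding r_def by simp
  qed
  have rl: "real_of_int (r i) \<le> real M * \<bar>u$i\<bar>" for i unfolding r_def by simp
  have ru: "real M * \<bar>u$i\<bar> < real_of_int (r i) + 1" for i unfolding r_def by linarith
  have vi: "\<bar>v$i\<bar> = real_of_int (r i) / real M" for i
  proof -
    have "\<bar>v$i\<bar> = \<bar>real_of_int (k i)\<bar> / real M" using Mp by (simp add: v_def)
    also have "\<bar>real_of_int (k i)\<bar> = real_of_int (r i)" using r0[of i] by (simp add: k_def)
    finally show ?thesis .
  qed
  have comp: "\<bar>v$i\<bar> \<le> \<bar>u$i\<bar>" for i
    unfolding vi using rl[of i] Mp by (simp add: divide_le_eq mult.commute)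
  have diff: "\<bar>(u - v)$i\<bar> \<le> 1 / real M" for i
  proof -
    have "\<bar>(u - v)$i\<bar> = \<bar>u$i\<bar> - real_of_int (r i) / real M"
      using comp[of i] r0[of i] Mp by (auto simp: v_def k_def abs_if split: if_splits)
    also have "\<dots> \<le> 1 / real M"
    proof -
      have "\<bar>u$i\<bar> * real M \<le> real_of_int (r i) + 1" using ru[of i] by (simp add: mult.commute)
      then have "\<bar>u$i\<bar> \<le> (real_of_int (r i) + 1) / real M" using Mp by (simp add: le_divide_eq)
      also have "\<dots> = real_of_int (r i) / real M + 1 / real M" by (simp add: add_divide_distrib)
      finally show ?thesis by linarith
    qed
    finally show ?thesis .
  qed
  have "v \<in> net M"
    unfolding net_def
  proof
    show "v \<in> {v. norm v \<le> 1}"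
      using norm_le_componentwise_cart[of v u] comp u by fastforce
    show "v \<in> (\<lambda>k. \<chi> i. real_of_int (k i) / real M) ` (PiE UNIV (\<lambda>_. {- int M..int M}))"
    proof
      show "v = (\<chi> i. real_of_int (k i) / real M)" by (simp add: v_def)
      show "k \<in> PiE UNIV (\<lambda>_. {- int M..int M})" proof (auto simp: k_def)
        fix x show "- int M \<le> r x" using r0[of x] by linarith
        show "- r x \<le> int M" using r0[of x] by linarith
      qed (use rM in auto)
    qed
  qed
  moreover have "norm (u - v) \<le> real CARD('d) / real M"
  proof -
    have "norm (u - v) \<le> (\<Sum>i\<in>UNIV. \<bar>(u - v)$i\<bar>)" by (rule norm_le_l1_cart)
    also have "\<dots> \<le> (\<Sum>i\<in>(UNIV::'d set). 1 / real M)" by (intro sum_mono diff)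
    also have "\<dots> = real CARD('d) / real M" by simp
    finally show ?thesis .
  qed
  ultimately show ?thesis by blast
qed


lemma linear_quad: "linear (\<lambda>A::real^'d^'d. v \<bullet> (A *v v))"
  by (rule linearI) (simp_all add: matrix_vector_mult_add_rdistrib inner_add_right
      scaleR_matrix_vector_assoc[symmetric])

lemma linear_trace: "linear (trace :: real^'d^'d \<Rightarrow> real)"
  by (rule linearI) (simp_all add: trace_def sum_distrib_left sum.distrib)

lemma linear_transpose: "linear (transpose :: real^'d^'d \<Rightarrow> real^'d^'d)"
  by (rule linearI) (simp_all add: transpose_def vec_eq_iff)

lemma psd_entry_bound: assumes "psd A" shows "\<bar>A$i$j\<bar> \<le> trace A"
proof -
  have "\<bar>axis i 1 \<bullet> (A *v axis j 1)\<bar> \<le> trace A * norm (axis i (1::real)) * norm (axis j (1::real))"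
    by (rule psd_bilin[OF assms])
  moreover have "axis i 1 \<bullet> (A *v axis j 1) = A$i$j" by (simp add: bil axis_def ifmul)
  ultimately show ?thesis by simp
qed

lemma psd_norm_bound: fixes A :: "real^'d^'d" assumes "psd A"
  shows "norm A \<le> real CARD('d) * real CARD('d) * trace A"
proof -
  have "norm A \<le> (\<Sum>i\<in>UNIV. norm (A$i))"
    unfolding norm_vec_def by (rule L2_set_le_sum) simp
  also have "\<dots> \<le> (\<Sum>i\<in>(UNIV::'d set). real CARD('d) * trace A)"
  proof (rule sum_mono)
    fix i
    have "norm (A$i) \<le> (\<Sum>j\<in>UNIV. \<bar>A$i$j\<bar>)" by (rule norm_le_l1_cart)
    also have "\<dots> \<le> (\<Sum>j\<in>(UNIV::'d set). trace A)" by (intro sum_mono psd_entry_bound[OF assms])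
    finally show "norm (A$i) \<le> real CARD('d) * trace A" by simp
  qed
  also have "\<dots> = real CARD('d) * real CARD('d) * trace A" by simp
  finally show ?thesis .
qed

lemma psd_add: "psd A \<Longrightarrow> psd B \<Longrightarrow> psd (A + B)"
  unfolding psd_def
  by (auto simp: transpose_def vec_eq_iff matrix_vector_mult_add_rdistrib inner_add_right intro: add_nonneg_nonneg)

lemma psd_zero: "psd 0"
  unfolding psd_def by (simp add: transpose_def vec_eq_iff)

lemma psd_sum: "(\<And>t. t \<in> S \<Longrightarrow> psd (f t)) \<Longrightarrow> psd (\<Sum>t\<in>S. f t)"
  by (induction S rule: infinite_finite_induct) (auto simp: psd_zero psd_add)

lemma trace_zero: "trace (0::real^'d^'d) = 0" by (simp add: trace_def)

lemma mv_zero: "(0::real^'d^'d) *v v = 0" by (simp add: matrix_vector_mult_def vec_eq_iff)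

lemma trace_sum: fixes f :: "_ \<Rightarrow> real^'d^'d" shows "trace (\<Sum>t\<in>S. f t) = (\<Sum>t\<in>S. trace (f t))"
  by (induction S rule: infinite_finite_induct) (auto simp: trace_add trace_zero)

lemma quad_sum: "v \<bullet> ((\<Sum>t\<in>S. f t) *v v) = (\<Sum>t\<in>S. v \<bullet> (f t *v v))"
  by (induction S rule: infinite_finite_induct)
    (auto simp: matrix_vector_mult_add_rdistrib inner_add_right mv_zero)

lemma psd_quad_nonneg: "psd A \<Longrightarrow> 0 \<le> v \<bullet> (A *v v)"
  unfolding psd_def by blast

locale setting2 = setting Tr law pol
  for Tr :: "'t measure" and law :: "'p \<Rightarrow> 't measure" and pol +
  fixes psi :: "'t \<Rightarrow> real^'d^'d" and D :: real
  assumes psi_meas: "psi \<in> borel_measurable Tr"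
    and psi_psd: "\<And>\<tau>. \<tau> \<in> space Tr \<Longrightarrow> psd (psi \<tau>)"
    and psi_tr: "\<And>\<tau>. \<tau> \<in> space Tr \<Longrightarrow> trace (psi \<tau>) \<le> D"
begin

context
  fixes L assumes L: "prob_space L" "sets L = sets Tr"
begin

lemma spL: "space L = space Tr" using L(2) by (rule sets_eq_imp_space_eq)

lemma psi_int: "integrable L psi"
proof -
  interpret prob_space L by (rule L(1))
  show ?thesis
  proof (rule integrable_const_bound[where B="real CARD('d) * real CARD('d) * D"])
    show "AE x in L. norm (psi x) \<le> real CARD('d) * real CARD('d) * D"
    proof (rule AE_I2)
      fix x assume "x \<in> space L"
      then have x: "x \<in> space Tr" using spL by simp
      have "norm (psi x) \<le> real CARD('d) * real CARD('d) * trace (psi x)"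
        by (rule psd_norm_bound[OF psi_psd[OF x]])
      also have "\<dots> \<le> real CARD('d) * real CARD('d) * D" by (intro mult_left_mono psi_tr[OF x]) auto
      finally show "norm (psi x) \<le> real CARD('d) * real CARD('d) * D" .
    qed
    show "psi \<in> borel_measurable L" using psi_meas measurable_cong_sets[OF L(2) refl] by blast
  qed
qed

lemma Gam_lin: "linear Lf \<Longrightarrow> Lf (integral\<^sup>L L psi) = integral\<^sup>L L (\<lambda>x. Lf (psi x))"
  using integral_bounded_linear[OF _ psi_int, of Lf] by (simp add: linear_conv_bounded_linear)

lemma Gam_quad: "v \<bullet> (integral\<^sup>L L psi *v v) = integral\<^sup>L L (\<lambda>x. v \<bullet> (psi x *v v))"
  using Gam_lin[OF linear_quad[of v]] .

lemma Gam_psd: "psd (integral\<^sup>L L psi)"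
  unfolding psd_def
proof
  have "transpose (integral\<^sup>L L psi) = integral\<^sup>L L (\<lambda>x. transpose (psi x))"
    by (rule Gam_lin[OF linear_transpose])
  also have "\<dots> = integral\<^sup>L L psi"
    by (rule Bochner_Integration.integral_cong[OF refl]) (use psi_psd spL in \<open>auto simp: psd_def\<close>)
  finally show "transpose (integral\<^sup>L L psi) = integral\<^sup>L L psi" .
  show "\<forall>x. 0 \<le> x \<bullet> (integral\<^sup>L L psi *v x)"
  proof
    fix x show "0 \<le> x \<bullet> (integral\<^sup>L L psi *v x)"
      unfolding Gam_quad by (intro Bochner_Integration.integral_nonneg) (use psi_psd spL in \<open>auto simp: psd_def\<close>)
  qed
qed

lemma Gam_trace: "trace (integral\<^sup>L L psi) \<le> D"
proof -
  interpret prob_space L by (rule L(1))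
  have "trace (integral\<^sup>L L psi) = integral\<^sup>L L (\<lambda>x. trace (psi x))"
    by (rule Gam_lin[OF linear_trace])
  also have "\<dots> \<le> integral\<^sup>L L (\<lambda>x. D)"
  proof (rule integral_mono)
    show "integrable L (\<lambda>x. trace (psi x))"
      using integrable_bounded_linear[OF _ psi_int, of trace] linear_trace
      by (simp add: linear_conv_bounded_linear)
  qed (use psi_tr spL in auto)
  also have "\<dots> = D" by (simp add: prob_space)
  finally show ?thesis .
qed

end

lemma q_meas: "(\<lambda>x. v \<bullet> (psi x *v v)) \<in> borel_measurable Tr"
proof -
  have "(\<lambda>A::real^'d^'d. v \<bullet> (A *v v)) \<in> borel_measurable borel"
    by (intro borel_measurable_continuous_onI linear_continuous_on)
      (simp add: linear_conv_bounded_linear[symmetric] linear_quad)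
  then show ?thesis using measurable_compose[OF psi_meas] by blast
qed

lemma q_bound: assumes "x \<in> space Tr" "norm v \<le> 1"
  shows "0 \<le> v \<bullet> (psi x *v v) \<and> v \<bullet> (psi x *v v) \<le> D"
proof
  show "0 \<le> v \<bullet> (psi x *v v)" by (rule psd_quad_nonneg[OF psi_psd[OF assms(1)]])
  have tr0: "0 \<le> trace (psi x)" unfolding trace_def using psd_diag[OF psi_psd[OF assms(1)]] by (intro sum_nonneg) auto
  have "v \<bullet> (psi x *v v) \<le> trace (psi x) * norm v * norm v"
    using psd_bilin[OF psi_psd[OF assms(1)], of v v] by simp
  also have "\<dots> \<le> trace (psi x) * 1 * 1"
    using assms(2) tr0 by (intro mult_mono mult_left_mono) auto
  also have "\<dots> \<le> D" using psi_tr[OF assms(1)] by simp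
  finally show "v \<bullet> (psi x *v v) \<le> D" .
qed

end


lemma perturb: fixes A :: "real^'d^'d"
  assumes A: "psd A" "trace A \<le> B" and u: "norm u \<le> 1" and v: "norm v \<le> 1"
  shows "\<bar>u \<bullet> (A *v u) - v \<bullet> (A *v v)\<bar> \<le> 2 * B * norm (u - v)"
proof -
  have sym: "transpose A = A" using A(1) unfolding psd_def by blast
  have "v \<bullet> (A *v u) = u \<bullet> (A *v v)"
    using sym_inner[OF sym, of v u] by (simp add: inner_commute)
  then have eq: "u \<bullet> (A *v u) - v \<bullet> (A *v v) = (u - v) \<bullet> (A *v (u + v))"
    by (simp add: matrix_vector_right_distrib inner_add_right inner_diff_left)
  have tr0: "0 \<le> trace A" unfolding trace_def using psd_diag[OF A(1)] by (intro sum_nonneg) auto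
  have "\<bar>(u - v) \<bullet> (A *v (u + v))\<bar> \<le> trace A * norm (u - v) * norm (u + v)" by (rule psd_bilin[OF A(1)])
  also have "\<dots> \<le> B * norm (u - v) * 2"
  proof -
    have "norm (u + v) \<le> 2" using norm_triangle_ineq[of u v] u v by linarith
    then show ?thesis using tr0 A(2) by (intro mult_mono) auto
  qed
  finally show ?thesis unfolding eq by (simp add: mult_ac)
qed

lemma det:
  fixes S S' G :: "real^'d^'d" and V :: "(real^'d) set"
  assumes pS: "psd S" and pS': "psd S'" and pG: "psd G"
    and tS: "trace S \<le> B" and tS': "trace S' \<le> B" and tG: "trace G \<le> B"
    and m0: "0 \<le> m" and Sm: "\<And>x. m * (norm x)^2 \<le> x \<bullet> (S *v x)"
    and Vn: "\<And>v. v \<in> V \<Longrightarrow> norm v \<le> 1"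
    and cover: "\<And>u. norm u = 1 \<Longrightarrow> \<exists>v\<in>V. 2 * B * norm (u - v) \<le> k"
    and k: "k \<le> m / 3136" and e: "e \<le> m / 3136"
    and ev1: "\<And>v. v \<in> V \<Longrightarrow> (1/10) * (v \<bullet> (S *v v)) - c1 * (v \<bullet> (G *v v)) \<le> e"
    and ev2: "\<And>v. v \<in> V \<Longrightarrow> c2 * (v \<bullet> (G *v v)) - (1/10) * (v \<bullet> (S' *v v)) \<le> e"
    and c1: "0 < c1" "c1 \<le> 1/9" and c2: "1/11 \<le> c2"
  shows "m / 2 \<le> lambda_min G \<and> m / 2 \<le> lambda_min S'"
proof
  have symG: "transpose G = G" using pG unfolding psd_def by blast
  obtain u where u: "norm u = 1" "lambda_min G = u \<bullet> (G *v u)"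
    using lambda_min_char[OF symG] by blast
  obtain v where v: "v \<in> V" "2 * B * norm (u - v) \<le> k" using cover[OF u(1)] by blast
  have vn: "norm v \<le> 1" using Vn[OF v(1)] .
  have su: "m \<le> u \<bullet> (S *v u)" using Sm[of u] u(1) by simp
  have sv: "m - k \<le> v \<bullet> (S *v v)" using perturb[OF pS tS, of u v] u(1) vn v(2) su by linarith
  have gv0: "0 \<le> v \<bullet> (G *v v)" by (rule psd_quad_nonneg[OF pG])
  have "c1 * (v \<bullet> (G *v v)) \<le> (1/9) * (v \<bullet> (G *v v))" using c1 gv0 by (intro mult_right_mono) auto
  moreover have "(1/10) * m - (1/10) * k \<le> (1/10) * (v \<bullet> (S *v v))" using sv by simp
  ultimately have gv: "(9/10) * m - (9/10) * k - 9 * e \<le> v \<bullet> (G *v v)" using ev1[OF v(1)] by linarith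
  have gu: "v \<bullet> (G *v v) - k \<le> u \<bullet> (G *v u)" using perturb[OF pG tG, of u v] u(1) vn v(2) by linarith
  show "m / 2 \<le> lambda_min G" using u(2) gu gv k e m0 by linarith
next
  have symS: "transpose S' = S'" using pS' unfolding psd_def by blast
  obtain u where u: "norm u = 1" "lambda_min S' = u \<bullet> (S' *v u)"
    using lambda_min_char[OF symS] by blast
  obtain v where v: "v \<in> V" "2 * B * norm (u - v) \<le> k" using cover[OF u(1)] by blast
  have vn: "norm v \<le> 1" using Vn[OF v(1)] .
  have su: "m \<le> u \<bullet> (S *v u)" using Sm[of u] u(1) by simp
  have sv: "m - k \<le> v \<bullet> (S *v v)" using perturb[OF pS tS, of u v] u(1) vn v(2) su by linarith
  have gv0: "0 \<le> v \<bullet> (G *v v)" by (rule psd_quad_nonneg[OF pG])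
  have "c1 * (v \<bullet> (G *v v)) \<le> (1/9) * (v \<bullet> (G *v v))" using c1 gv0 by (intro mult_right_mono) auto
  moreover have "(1/10) * m - (1/10) * k \<le> (1/10) * (v \<bullet> (S *v v))" using sv by simp
  ultimately have gv: "(9/10) * m - (9/10) * k - 9 * e \<le> v \<bullet> (G *v v)" using ev1[OF v(1)] by linarith
  have "(1/11) * (v \<bullet> (G *v v)) \<le> c2 * (v \<bullet> (G *v v))" using c2 gv0 by (intro mult_right_mono) auto
  then have yv: "(9/110) * m - (9/110) * k - (9/11) * e - e \<le> (1/10) * (v \<bullet> (S' *v v))"
    using ev2[OF v(1)] gv by linarith
  have yu: "v \<bullet> (S' *v v) - k \<le> u \<bullet> (S' *v u)" using perturb[OF pS' tS', of u v] u(1) vn v(2) by linarith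
  show "m / 2 \<le> lambda_min S'" using u(2) yu yv k e m0 by linarith
qed


lemma exp_tenth: "1 < exp (1/10::real)" "exp (1/10::real) \<le> 10/9" "exp (-(1/10)::real) \<le> 10/11"
proof -
  show "1 < exp (1/10::real)" by simp
  have a: "1 + (-(1/10)) \<le> exp (-(1/10)::real)" by (rule exp_ge_add_one_self)
  have "exp (1/10::real) = inverse (exp (-(1/10)))" by (simp add: exp_minus)
  also have "\<dots> \<le> inverse (9/10)" using a by (intro le_imp_inverse_le) auto
  finally show "exp (1/10::real) \<le> 10/9" by simp
  have b: "1 + 1/10 \<le> exp (1/10::real)" by (rule exp_ge_add_one_self)
  have "exp (-(1/10)::real) = inverse (exp (1/10))" by (simp add: exp_minus)
  also have "\<dots> \<le> inverse (11/10)" using b by (intro le_imp_inverse_le) auto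
  finally show "exp (-(1/10)::real) \<le> 10/11" by simp
qed

lemma sum_div_lin: fixes x y :: "nat \<Rightarrow> real"
  shows "(\<Sum>t<T. a * (x t / D) - b * (y t / D)) = (a * (\<Sum>t<T. x t) - b * (\<Sum>t<T. y t)) / D"
  by (simp add: sum_subtractf sum_distrib_left sum_divide_distrib diff_divide_distrib)

context setting2 begin

lemma om_space: assumes "\<omega> \<in> space (joint Tr law pol n)" "t < n"
  shows "fst (\<omega> t) \<in> space Tr" "snd (\<omega> t) \<in> space Tr"
    "prob_space (law (pol t (hist \<omega> t)))" "sets (law (pol t (hist \<omega> t))) = sets Tr"
proof -
  have w: "\<omega> \<in> space (PP Tr n)" using assms(1) by (simp add: joint_space)
  have "\<omega> t \<in> space (Tr \<Otimes>\<^sub>M Tr)" using measurable_space[OF comp_meas[OF assms(2)] w] .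
  then show "fst (\<omega> t) \<in> space Tr" "snd (\<omega> t) \<in> space Tr" by (auto simp: space_pair_measure)
  have "hist \<omega> t \<in> space (PiM {..<t} (\<lambda>_. Tr))" using hist_space[OF w] assms(2) by simp
  then show "prob_space (law (pol t (hist \<omega> t)))" "sets (law (pol t (hist \<omega> t))) = sets Tr"
    using law_prob by auto
qed

lemma om_facts: assumes \<omega>: "\<omega> \<in> space (joint Tr law pol T)"
  shows "psd (\<Sum>t<T. psi (fst (\<omega> t)))" "trace (\<Sum>t<T. psi (fst (\<omega> t))) \<le> real T * D"
    "psd (\<Sum>t<T. psi (snd (\<omega> t)))" "trace (\<Sum>t<T. psi (snd (\<omega> t))) \<le> real T * D"
    "psd (\<Sum>t<T. Gamma law psi (pol t (hist \<omega> t)))"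
    "trace (\<Sum>t<T. Gamma law psi (pol t (hist \<omega> t))) \<le> real T * D"
    "v \<bullet> ((\<Sum>t<T. Gamma law psi (pol t (hist \<omega> t))) *v v)
       = (\<Sum>t<T. integral\<^sup>L (law (pol t (hist \<omega> t))) (\<lambda>x. v \<bullet> (psi x *v v)))"
proof -
  note os = om_space[OF \<omega>]
  show "psd (\<Sum>t<T. psi (fst (\<omega> t)))" by (intro psd_sum psi_psd os) simp
  show "trace (\<Sum>t<T. psi (fst (\<omega> t))) \<le> real T * D"
    unfolding trace_sum using sum_bounded_above[of "{..<T}" "\<lambda>t. trace (psi (fst (\<omega> t)))" D] psi_tr os
    by (simp add: mult.commute)
  show "psd (\<Sum>t<T. psi (snd (\<omega> t)))" by (intro psd_sum psi_psd os) simp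
  show "trace (\<Sum>t<T. psi (snd (\<omega> t))) \<le> real T * D"
    unfolding trace_sum using sum_bounded_above[of "{..<T}" "\<lambda>t. trace (psi (snd (\<omega> t)))" D] psi_tr os
    by (simp add: mult.commute)
  show "psd (\<Sum>t<T. Gamma law psi (pol t (hist \<omega> t)))"
    unfolding Gamma_def by (intro psd_sum Gam_psd os) auto
  show "trace (\<Sum>t<T. Gamma law psi (pol t (hist \<omega> t))) \<le> real T * D"
    unfolding trace_sum Gamma_def
    using sum_bounded_above[of "{..<T}" "\<lambda>t. trace (integral\<^sup>L (law (pol t (hist \<omega> t))) psi)" D] Gam_trace os
    by (simp add: mult.commute)
  show "v \<bullet> ((\<Sum>t<T. Gamma law psi (pol t (hist \<omega> t))) *v v)
       = (\<Sum>t<T. integral\<^sup>L (law (pol t (hist \<omega> t))) (\<lambda>x. v \<bullet> (psi x *v v)))"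
    unfolding quad_sum Gamma_def by (intro sum.cong refl Gam_quad os) auto
qed


lemma main_case:
  assumes Dp: "0 < D" and T1: "1 \<le> T" and \<delta>: "0 < \<delta>" "\<delta> < 1"
  shows "\<exists>A \<in> sets (joint Tr law pol T).
           1 - \<delta> \<le> measure (joint Tr law pol T) A \<and>
           (\<forall>\<omega>\<in>A. lambda_min (\<Sum>t<T. psi (fst (\<omega> t))) \<ge> 12544 * D * real CARD('d) * ln ((2 + 32 * real T) / \<delta>) \<longrightarrow>
                 lambda_min (\<Sum>t<T. psi (snd (\<omega> t))) \<ge> lambda_min (\<Sum>t<T. psi (fst (\<omega> t))) / 2 \<and>
                 lambda_min (\<Sum>t<T. Gamma law psi (pol t (hist \<omega> t))) \<ge> lambda_min (\<Sum>t<T. psi (fst (\<omega> t))) / 2)"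
proof -
  define J where "J = joint Tr law pol T"
  interpret J: prob_space J unfolding J_def by (rule joint_ps)
  define d where "d = real CARD('d)"
  define M where "M = T * CARD('d)"
  define V :: "(real^'d) set" where "V = net M"
  define K0 :: nat where "K0 = (2*M+1)^CARD('d)"
  define c where "c = ln (2 * real K0 / \<delta>)"
  define \<theta> :: real where "\<theta> = 1/10"
  define f where "f v x = v \<bullet> (psi x *v v) / D" for v x
  define Bad where "Bad vb = (if snd vb then
      {\<omega> \<in> space J. c < (\<Sum>t<T. \<theta> * f (fst vb) (fst (\<omega> t)) - (exp \<theta> - 1) * integral\<^sup>L (law (pol t (hist \<omega> t))) (f (fst vb)))}
    else {\<omega> \<in> space J. c < (\<Sum>t<T. (-\<theta>) * f (fst vb) (snd (\<omega> t)) - (exp (-\<theta>) - 1) * integral\<^sup>L (law (pol t (hist \<omega> t))) (f (fst vb)))})" for vb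
  have K0p: "0 < K0" unfolding K0_def by simp
  have expc: "exp (- c) = \<delta> / (2 * real K0)"
    unfolding c_def using K0p \<delta> by (simp add: exp_minus)
  have Vfin: "finite V" and Vcard: "card V \<le> K0" using net_card[where M=M] unfolding V_def K0_def by auto
  have Vn: "norm v \<le> 1" if "v \<in> V" for v using that unfolding V_def net_def by auto
  have fm: "f v \<in> borel_measurable Tr" for v unfolding f_def using q_meas[of v] by measurable
  have fb: "0 \<le> f v x \<and> f v x \<le> 1" if "v \<in> V" "x \<in> space Tr" for v x
    using q_bound[OF that(2) Vn[OF that(1)]] Dp unfolding f_def by auto
  have Bad: "Bad vb \<in> sets J \<and> emeasure J (Bad vb) \<le> ennreal (\<delta> / (2 * real K0))" if "vb \<in> V \<times> UNIV" for vb
  proof (cases "snd vb")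
    case True
    have v: "fst vb \<in> V" using that by auto
    show ?thesis using event_bound[OF fm fb[OF v], of fst T c \<theta>] True unfolding Bad_def J_def expc by auto
  next
    case False
    have v: "fst vb \<in> V" using that by auto
    show ?thesis using event_bound[OF fm fb[OF v], of snd T c "-\<theta>"] False unfolding Bad_def J_def expc by auto
  qed
  define U where "U = (\<Union>vb\<in>V \<times> UNIV. Bad vb)"
  define A where "A = space J - U"
  have Us: "U \<in> sets J" unfolding U_def using Bad Vfin by (intro sets.finite_UN) auto
  have As: "A \<in> sets J" unfolding A_def using Us by auto
  have mU: "measure J U \<le> \<delta>"
  proof -
    have "measure J U \<le> (\<Sum>vb\<in>V \<times> UNIV. measure J (Bad vb))"
      unfolding U_def by (rule J.finite_measure_subadditive_finite) (use Bad Vfin in auto)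
    also have "\<dots> \<le> (\<Sum>vb\<in>V \<times> (UNIV::bool set). \<delta> / (2 * real K0))"
    proof (rule sum_mono)
      fix vb assume "vb \<in> V \<times> (UNIV::bool set)"
      then have "ennreal (measure J (Bad vb)) \<le> ennreal (\<delta> / (2 * real K0))"
        using Bad J.emeasure_eq_measure by metis
      then show "measure J (Bad vb) \<le> \<delta> / (2 * real K0)" using \<delta> K0p by (simp add: ennreal_le_iff)
    qed
    also have "\<dots> = real (card V) * 2 * (\<delta> / (2 * real K0))" by (simp add: card_cartesian_product)
    also have "\<dots> \<le> real K0 * 2 * (\<delta> / (2 * real K0))"
      using Vcard \<delta> by (intro mult_right_mono) auto
    also have "\<dots> = \<delta>" using K0p by simp
    finally show ?thesis .
  qed
  have mA: "1 - \<delta> \<le> measure J A" unfolding A_def using J.prob_compl[OF Us] mU by simp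
  show ?thesis
  proof (intro bexI[of _ A] conjI ballI impI)
    show "A \<in> sets (joint Tr law pol T)" using As unfolding J_def .
    show "1 - \<delta> \<le> measure (joint Tr law pol T) A" using mA unfolding J_def .
    fix \<omega> assume \<omega>A: "\<omega> \<in> A"
    assume hyp: "12544 * D * real CARD('d) * ln ((2 + 32 * real T) / \<delta>) \<le> lambda_min (\<Sum>t<T. psi (fst (\<omega> t)))"
    have both: "lambda_min (\<Sum>t<T. psi (fst (\<omega> t))) / 2 \<le> lambda_min (\<Sum>t<T. psi (snd (\<omega> t))) \<and>
          lambda_min (\<Sum>t<T. psi (fst (\<omega> t))) / 2 \<le> lambda_min (\<Sum>t<T. Gamma law psi (pol t (hist \<omega> t)))"
    proof -
      define Sg where "Sg = (\<Sum>t<T. psi (fst (\<omega> t)))"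
      define Sg' where "Sg' = (\<Sum>t<T. psi (snd (\<omega> t)))"
      define G where "G = (\<Sum>t<T. Gamma law psi (pol t (hist \<omega> t)))"
      define m where "m = lambda_min Sg"
      define ll where "ll = ln ((2 + 32 * real T) / \<delta>)"
      have \<omega>J: "\<omega> \<in> space (joint Tr law pol T)" using \<omega>A unfolding A_def J_def by auto
      have nB: "\<omega> \<notin> Bad vb" if "vb \<in> V \<times> UNIV" for vb using \<omega>A that unfolding A_def U_def by auto
      note of = om_facts[OF \<omega>J]
      have hyp': "12544 * D * d * ll \<le> m" using hyp unfolding m_def Sg_def ll_def d_def by simp
      have d1: "1 \<le> d" unfolding d_def by simp
      have Tr: "1 \<le> real T" using T1 by simp
      have l1: "1 \<le> ll"
      proof -
        have "exp 1 \<le> (3::real)" by (rule exp_le)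
        also have "3 \<le> (2 + 32 * real T) / \<delta>" using \<delta> Tr by (simp add: le_divide_eq)
        finally show ?thesis unfolding ll_def using \<delta> by (subst ln_ge_iff) auto
      qed
      have m0: "0 \<le> m" using hyp' Dp d1 l1 by (smt (verit) mult_nonneg_nonneg)
      have symS: "transpose Sg = Sg" using of(1) unfolding Sg_def psd_def by blast
      obtain u0 where "\<forall>x. lambda_min Sg * (norm x)^2 \<le> x \<bullet> (Sg *v x)"
        using lambda_min_char[OF symS] by blast
      then have Sm: "\<And>x. m * (norm x)^2 \<le> x \<bullet> (Sg *v x)" unfolding m_def by blast
      have dm: "d * m \<le> real T * D"
      proof -
        have "m \<le> Sg$i$i" for i
        proof -
          have "m * (norm (axis i (1::real)))^2 \<le> axis i 1 \<bullet> (Sg *v axis i 1)" by (rule Sm)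
          also have "axis i 1 \<bullet> (Sg *v axis i 1) = Sg$i$i" by (simp add: bil axis_def ifmul)
          finally show ?thesis by simp
        qed
        then have "(\<Sum>i\<in>(UNIV::'d set). m) \<le> trace Sg" unfolding trace_def by (intro sum_mono) auto
        then have "d * m \<le> trace Sg" unfolding d_def by simp
        then show ?thesis using of(2) unfolding Sg_def by linarith
      qed
      have Tbig: "d * d \<le> real T"
      proof -
        have "12544 * D * d * ll * d \<le> m * d" using hyp' d1 by (intro mult_right_mono) auto
        also have "\<dots> \<le> real T * D" using dm by (simp add: mult.commute)
        finally have "D * (12544 * d * d * ll) \<le> D * real T" by (simp add: mult_ac)
        then have "12544 * d * d * ll \<le> real T" using Dp by simp
        moreover have "d * d \<le> 12544 * d * d * ll"
        proof -
          have "d * d * 1 \<le> d * d * (12544 * ll)" using l1 d1 by (intro mult_left_mono) auto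
          then show ?thesis by (simp add: mult_ac)
        qed
        ultimately show ?thesis by linarith
      qed
      have "d * 1 \<le> d * d" using d1 by (intro mult_left_mono) auto
      then have dT: "d \<le> real T" using Tbig by linarith
      have M1: "1 \<le> M" unfolding M_def using T1 by simp
      have rM: "real M = real T * d" unfolding M_def d_def by simp
      have cb: "c \<le> 4 * d * ll"
      proof -
        have lT: "ln (2 + 32 * real T) \<le> ll" unfolding ll_def using \<delta> Tr
          by (simp add: ln_div ln_le_cancel_iff)
        have lT0: "0 \<le> ln (2 + 32 * real T)" using Tr by simp
        have ld: "- ln \<delta> \<le> ll" unfolding ll_def using \<delta> Tr lT0 by (simp add: ln_div)
        have l2: "ln 2 \<le> ll" using lT Tr by (smt (verit) ln_le_cancel_iff)
        have "2 * real M + 1 \<le> (2 + 32 * real T)^2"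
        proof -
          have "real M \<le> real T * real T" unfolding rM using dT Tr by (intro mult_left_mono) auto
          then show ?thesis using Tr by (simp add: power2_eq_square algebra_simps)
        qed
        then have "ln (2 * real M + 1) \<le> ln ((2 + 32 * real T)^2)" using Tr by (subst ln_le_cancel_iff) auto
        also have "\<dots> = 2 * ln (2 + 32 * real T)" by (simp add: ln_realpow)
        finally have lM: "ln (2 * real M + 1) \<le> 2 * ll" using lT by linarith
        have "c = ln 2 + d * ln (2 * real M + 1) - ln \<delta>"
          unfolding c_def K0_def d_def using \<delta> by (simp add: ln_div ln_mult ln_realpow)
        also have "\<dots> \<le> ll + d * (2 * ll) + ll" using lM l2 ld d1 by (smt (verit) mult_left_mono)
        also have "\<dots> \<le> 4 * d * ll"
        proof -
          have "1 * ll \<le> d * ll" using d1 l1 by (intro mult_right_mono) auto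
          moreover have "ll + d * (2 * ll) + ll = 2 * ll + 2 * (d * ll)" by (simp add: algebra_simps)
          moreover have "4 * d * ll = 4 * (d * ll)" by simp
          ultimately show ?thesis by linarith
        qed
        finally show ?thesis .
      qed
      have e_b: "D * c \<le> m / 3136"
      proof -
        have "D * c \<le> D * (4 * d * ll)" using cb Dp by (intro mult_left_mono) auto
        then show ?thesis using hyp' by (simp add: mult_ac)
      qed
      have k_b: "2 * D \<le> m / 3136"
      proof -
        have "1 * 1 \<le> d * ll" using d1 l1 by (intro mult_mono) auto
        then have "D * 1 \<le> D * (d * ll)" using Dp by (intro mult_left_mono) auto
        moreover have "12544 * D * d * ll = 12544 * (D * (d * ll))" by simp
        ultimately show ?thesis using hyp' Dp by linarith
      qed
      have cover: "\<exists>v\<in>V. 2 * (real T * D) * norm (u - v) \<le> 2 * D" if "norm u = 1" for u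
      proof -
        have un: "norm u \<le> 1" using that by simp
        obtain v where v: "v \<in> V" "norm (u - v) \<le> d / real M"
          using net_cover[OF M1 un] unfolding V_def d_def by blast
        have "2 * (real T * D) * norm (u - v) \<le> 2 * (real T * D) * (d / real M)"
          using v(2) Dp Tr by (intro mult_left_mono) auto
        also have "\<dots> = 2 * D" unfolding rM using Tr d1 by (simp add: field_simps)
        finally show ?thesis using v(1) by blast
      qed
      have ints: "integral\<^sup>L (law (pol t (hist \<omega> t))) (f v) = integral\<^sup>L (law (pol t (hist \<omega> t))) (\<lambda>x. v \<bullet> (psi x *v v)) / D" for v t
        unfolding f_def by (rule integral_divide_zero)
      have gq: "v \<bullet> (G *v v) = (\<Sum>t<T. integral\<^sup>L (law (pol t (hist \<omega> t))) (\<lambda>x. v \<bullet> (psi x *v v)))" for v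
        using of(7) unfolding G_def .
      have sq: "v \<bullet> (Sg *v v) = (\<Sum>t<T. v \<bullet> (psi (fst (\<omega> t)) *v v))" for v
        unfolding Sg_def by (rule quad_sum)
      have sq': "v \<bullet> (Sg' *v v) = (\<Sum>t<T. v \<bullet> (psi (snd (\<omega> t)) *v v))" for v
        unfolding Sg'_def by (rule quad_sum)
      have ev1: "(1/10) * (v \<bullet> (Sg *v v)) - (exp (1/10) - 1) * (v \<bullet> (G *v v)) \<le> D * c" if v: "v \<in> V" for v
      proof -
        have "\<not> c < (\<Sum>t<T. \<theta> * f v (fst (\<omega> t)) - (exp \<theta> - 1) * integral\<^sup>L (law (pol t (hist \<omega> t))) (f v))"
          using nB[of "(v, True)"] v \<omega>J unfolding Bad_def J_def by auto
        then have "(\<Sum>t<T. \<theta> * (v \<bullet> (psi (fst (\<omega> t)) *v v) / D) - (exp \<theta> - 1) * (integral\<^sup>L (law (pol t (hist \<omega> t))) (\<lambda>x. v \<bullet> (psi x *v v)) / D)) \<le> c"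
          unfolding ints by (simp add: f_def)
        then have "(\<theta> * (v \<bullet> (Sg *v v)) - (exp \<theta> - 1) * (v \<bullet> (G *v v))) / D \<le> c"
          unfolding sum_div_lin gq[symmetric] sq[symmetric] .
        then show ?thesis using Dp unfolding \<theta>_def by (simp add: divide_le_eq mult.commute)
      qed
      have ev2: "(1 - exp (-(1/10))) * (v \<bullet> (G *v v)) - (1/10) * (v \<bullet> (Sg' *v v)) \<le> D * c" if v: "v \<in> V" for v
      proof -
        have "\<not> c < (\<Sum>t<T. (-\<theta>) * f v (snd (\<omega> t)) - (exp (-\<theta>) - 1) * integral\<^sup>L (law (pol t (hist \<omega> t))) (f v))"
          using nB[of "(v, False)"] v \<omega>J unfolding Bad_def J_def by auto
        then have "(\<Sum>t<T. (-\<theta>) * (v \<bullet> (psi (snd (\<omega> t)) *v v) / D) - (exp (-\<theta>) - 1) * (integral\<^sup>L (law (pol t (hist \<omega> t))) (\<lambda>x. v \<bullet> (psi x *v v)) / D)) \<le> c"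
          unfolding ints by (simp add: f_def)
        then have "((-\<theta>) * (v \<bullet> (Sg' *v v)) - (exp (-\<theta>) - 1) * (v \<bullet> (G *v v))) / D \<le> c"
          unfolding sum_div_lin gq[symmetric] sq'[symmetric] .
        then have "(-\<theta>) * (v \<bullet> (Sg' *v v)) - (exp (-\<theta>) - 1) * (v \<bullet> (G *v v)) \<le> D * c"
          using Dp by (simp add: divide_le_eq mult.commute)
        then show ?thesis unfolding \<theta>_def by (simp add: algebra_simps)
      qed
      have pp: "psd Sg" "psd Sg'" "psd G" "trace Sg \<le> real T * D" "trace Sg' \<le> real T * D" "trace G \<le> real T * D"
        using of unfolding Sg_def Sg'_def G_def by auto
      have cc: "0 < exp (1/10::real) - 1" "exp (1/10::real) - 1 \<le> 1/9" "1/11 \<le> 1 - exp (-(1/10::real))"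
        using exp_tenth by auto
      have res: "m / 2 \<le> lambda_min G \<and> m / 2 \<le> lambda_min Sg'"
        by (rule det[where B="real T * D", OF pp m0 Sm Vn cover k_b e_b ev1 ev2 cc])
      then show ?thesis unfolding m_def Sg_def Sg'_def G_def by auto
    qed
    then show "lambda_min (\<Sum>t<T. psi (fst (\<omega> t))) / 2 \<le> lambda_min (\<Sum>t<T. psi (snd (\<omega> t)))" by blast
    from both show "lambda_min (\<Sum>t<T. psi (fst (\<omega> t))) / 2 \<le> lambda_min (\<Sum>t<T. Gamma law psi (pol t (hist \<omega> t)))" by blast
  qed
qed


lemma psi_zero: assumes "D \<le> 0" "\<tau> \<in> space Tr" shows "psi \<tau> = 0"
proof -
  have "\<bar>psi \<tau> $ i $ j\<bar> \<le> 0" for i j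
    using psd_entry_bound[OF psi_psd[OF assms(2)], of i j] psi_tr[OF assms(2)] assms(1) by linarith
  then show ?thesis by (simp add: vec_eq_iff)
qed

lemma lambda_min_zero: "lambda_min (0::real^'d^'d) = 0"
proof -
  have "transpose (0::real^'d^'d) = 0" by (simp add: transpose_def vec_eq_iff)
  from lambda_min_char[OF this] obtain u where "lambda_min (0::real^'d^'d) = u \<bullet> ((0::real^'d^'d) *v u)"
    by blast
  then show ?thesis by (simp add: mv_zero)
qed

lemma zero_case: assumes D: "D \<le> 0" and \<omega>: "\<omega> \<in> space (joint Tr law pol T)"
  shows "(\<Sum>t<T. psi (fst (\<omega> t))) = 0" "(\<Sum>t<T. psi (snd (\<omega> t))) = 0"
    "(\<Sum>t<T. Gamma law psi (pol t (hist \<omega> t))) = 0"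
proof -
  note os = om_space[OF \<omega>]
  show "(\<Sum>t<T. psi (fst (\<omega> t))) = 0" using psi_zero[OF D] os by (intro sum.neutral) auto
  show "(\<Sum>t<T. psi (snd (\<omega> t))) = 0" using psi_zero[OF D] os by (intro sum.neutral) auto
  show "(\<Sum>t<T. Gamma law psi (pol t (hist \<omega> t))) = 0"
  proof (intro sum.neutral ballI)
    fix t assume t: "t \<in> {..<T}"
    then have L: "sets (law (pol t (hist \<omega> t))) = sets Tr" using os by auto
    have sp: "space (law (pol t (hist \<omega> t))) = space Tr" using L by (rule sets_eq_imp_space_eq)
    have "Gamma law psi (pol t (hist \<omega> t)) = integral\<^sup>L (law (pol t (hist \<omega> t))) (\<lambda>_. 0)"
      unfolding Gamma_def by (rule Bochner_Integration.integral_cong[OF refl]) (use psi_zero[OF D] sp in auto)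
    then show "Gamma law psi (pol t (hist \<omega> t)) = 0" by simp
  qed
qed

end

theorem mainTheorem14:
  fixes Tr :: "'t measure"
    and law :: "'p \<Rightarrow> 't measure"
    and pol :: "nat \<Rightarrow> (nat \<Rightarrow> 't) \<Rightarrow> 'p"
    and psi :: "'t \<Rightarrow> real^'d^'d"
    and D \<delta> :: real and T :: nat
  assumes law_kernel: "\<And>t. (\<lambda>h. law (pol t h)) \<in> PiM {..<t} (\<lambda>_. Tr) \<rightarrow>\<^sub>M prob_algebra Tr"
    and psi_meas: "psi \<in> borel_measurable Tr"
    and psi_psd: "\<And>\<tau>. \<tau> \<in> space Tr \<Longrightarrow> psd (psi \<tau>)"
    and psi_tr: "\<And>\<tau>. \<tau> \<in> space Tr \<Longrightarrow> trace (psi \<tau>) \<le> D"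
    and delta: "0 < \<delta>" "\<delta> < 1"
  shows "\<exists>A \<in> sets (joint Tr law pol T).
           1 - \<delta> \<le> measure (joint Tr law pol T) A \<and>
           (\<forall>\<omega>\<in>A.
              let \<Sigma> = (\<Sum>t<T. psi (fst (\<omega> t)));
                  \<Sigma>' = (\<Sum>t<T. psi (snd (\<omega> t)));
                  G = (\<Sum>t<T. Gamma law psi (pol t (hist \<omega> t)))
              in lambda_min \<Sigma> \<ge> 12544 * D * real CARD('d) * ln ((2 + 32 * real T) / \<delta>) \<longrightarrow>
                 lambda_min \<Sigma>' \<ge> lambda_min \<Sigma> / 2 \<and> lambda_min G \<ge> lambda_min \<Sigma> / 2)"
proof -
  interpret setting2 Tr law pol psi D
    by unfold_locales (use law_kernel psi_meas psi_psd psi_tr in auto)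
  interpret J: prob_space "joint Tr law pol T" by (rule joint_ps)
  show ?thesis
  proof (cases "0 < D \<and> 1 \<le> T")
    case True
    then show ?thesis unfolding Let_def using main_case[of T \<delta>] delta by auto
  next
    case False
    show ?thesis unfolding Let_def
    proof (intro bexI[of _ "space (joint Tr law pol T)"] conjI ballI impI)
      show "space (joint Tr law pol T) \<in> sets (joint Tr law pol T)" by simp
      show "1 - \<delta> \<le> measure (joint Tr law pol T) (space (joint Tr law pol T))"
        using delta by (simp add: J.prob_space)
      fix \<omega> assume \<omega>: "\<omega> \<in> space (joint Tr law pol T)"
      assume hyp: "12544 * D * real CARD('d) * ln ((2 + 32 * real T) / \<delta>) \<le> lambda_min (\<Sum>t<T. psi (fst (\<omega> t)))"
      have both: "lambda_min (\<Sum>t<T. psi (fst (\<omega> t))) / 2 \<le> lambda_min (\<Sum>t<T. psi (snd (\<omega> t))) \<and>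
          lambda_min (\<Sum>t<T. psi (fst (\<omega> t))) / 2 \<le> lambda_min (\<Sum>t<T. Gamma law psi (pol t (hist \<omega> t)))"
      proof (cases "D \<le> 0")
        case True
        then show ?thesis using zero_case[OF True \<omega>] by (simp add: lambda_min_zero)
      next
        case nD: False
        then have T0: "T = 0" using False by auto
        have "0 < ln ((2 + 32 * real T) / \<delta>)" using delta T0 by simp
        then have "0 < 12544 * D * real CARD('d) * ln ((2 + 32 * real T) / \<delta>)"
          using nD by simp
        then show ?thesis using hyp T0 by (simp add: lambda_min_zero)
      qed
      then show "lambda_min (\<Sum>t<T. psi (fst (\<omega> t))) / 2 \<le> lambda_min (\<Sum>t<T. psi (snd (\<omega> t)))" by blast
      from both show "lambda_min (\<Sum>t<T. psi (fst (\<omega> t))) / 2 \<le> lambda_min (\<Sum>t<T. Gamma law psi (pol t (hist \<omega> t)))" by blast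
    qed
  qed
qed

end
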